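(* Let $\{G_i\}$ be a family of graphs with common induced subgraph $J$, embedded as $J_i\subseteq G_i$, such that $\{(G_i|J_i)\}$ is isometric, and let $H=\amalg\{(G_i|J_i)\}$. If every $G_i$ is connected and bipartite, then $\dim_l(H)=1$.
   Context: $d_G$ is shortest-path distance. A vertex $w$ distinguishes an edge $uv$ if $d(w,u)\neq d(w,v)$; $\dim_l(G)$ is the minimum size of a set $B\subseteq V(G)$ such that every edge of $G$ is distinguished by a vertex of $B$. $J$ is a common induced subgraph of each $G_i$ via injective maps $\iota_i:V(J)\to V(G_i)$ with $\iota_i(x)\iota_i(y)\in E(G_i)$ iff $xy\in E(J)$; $J_i$ is the induced image and $x^i=\iota_i(x)$. $H=\amalg\{(G_i|J_i)\}$ is obtained from the disjoint union of the $G_i$ by identifying, for each $x\in V(J)$, all $x^i$ into one vertex. The family is isometric if $d_{G_i}(a^i,b^i)=d_{G_j}(a^j,b^j)$ for all $i,j$ and $a,b\in V(J)$. *)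

theory Defs
  imports "HOL-Library.Extended_Nat"
begin

definition graph :: "'a set \<Rightarrow> ('a \<Rightarrow> 'a \<Rightarrow> bool) \<Rightarrow> bool" where
  "graph V E \<longleftrightarrow> finite V \<and> (\<forall>u v. E u v \<longrightarrow> u \<in> V \<and> v \<in> V \<and> u \<noteq> v \<and> E v u)"

fun kwalk :: "('a \<Rightarrow> 'a \<Rightarrow> bool) \<Rightarrow> nat \<Rightarrow> 'a \<Rightarrow> 'a \<Rightarrow> bool" where
  "kwalk E 0 u v = (u = v)"
| "kwalk E (Suc n) u v = (\<exists>w. E u w \<and> kwalk E n w v)"

definition gdist :: "('a \<Rightarrow> 'a \<Rightarrow> bool) \<Rightarrow> 'a \<Rightarrow> 'a \<Rightarrow> enat" where
  "gdist E u v = (if \<exists>n. kwalk E n u v then enat (LEAST n. kwalk E n u v) else \<infinity>)"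

definition connected_graph :: "'a set \<Rightarrow> ('a \<Rightarrow> 'a \<Rightarrow> bool) \<Rightarrow> bool" where
  "connected_graph V E \<longleftrightarrow> (\<forall>u\<in>V. \<forall>v\<in>V. \<exists>n. kwalk E n u v)"

definition bipartite :: "'a set \<Rightarrow> ('a \<Rightarrow> 'a \<Rightarrow> bool) \<Rightarrow> bool" where
  "bipartite V E \<longleftrightarrow> (\<exists>A \<subseteq> V. \<forall>u v. E u v \<longrightarrow> (u \<in> A \<longleftrightarrow> v \<notin> A))"

definition edge_resolving :: "'a set \<Rightarrow> ('a \<Rightarrow> 'a \<Rightarrow> bool) \<Rightarrow> 'a set \<Rightarrow> bool" where
  "edge_resolving V E B \<longleftrightarrow> B \<subseteq> V \<and>
     (\<forall>u v. E u v \<longrightarrow> (\<exists>w\<in>B. gdist E w u \<noteq> gdist E w v))"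

definition edge_metric_dim :: "'a set \<Rightarrow> ('a \<Rightarrow> 'a \<Rightarrow> bool) \<Rightarrow> nat" where
  "edge_metric_dim V E = (LEAST k. \<exists>B. finite B \<and> card B = k \<and> edge_resolving V E B)"

text \<open>Amalgamation: vertices of J (Inl) and vertices of G_i outside J_i (Inr (i,v)).\<close>
definition amal_proj :: "'j set \<Rightarrow> ('i \<Rightarrow> 'j \<Rightarrow> 'v) \<Rightarrow> 'i \<Rightarrow> 'v \<Rightarrow> 'j + ('i \<times> 'v)" where
  "amal_proj VJ \<iota> i v = (if v \<in> \<iota> i ` VJ then Inl (the_inv_into VJ (\<iota> i) v) else Inr (i, v))"

definition amal_V :: "'i set \<Rightarrow> ('i \<Rightarrow> 'v set) \<Rightarrow> 'j set \<Rightarrow> ('i \<Rightarrow> 'j \<Rightarrow> 'v)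
    \<Rightarrow> ('j + ('i \<times> 'v)) set" where
  "amal_V I V VJ \<iota> = (\<Union>i\<in>I. amal_proj VJ \<iota> i ` V i)"

definition amal_E :: "'i set \<Rightarrow> ('i \<Rightarrow> 'v set) \<Rightarrow> ('i \<Rightarrow> 'v \<Rightarrow> 'v \<Rightarrow> bool) \<Rightarrow> 'j set
    \<Rightarrow> ('i \<Rightarrow> 'j \<Rightarrow> 'v) \<Rightarrow> 'j + ('i \<times> 'v) \<Rightarrow> 'j + ('i \<times> 'v) \<Rightarrow> bool" where
  "amal_E I V E VJ \<iota> a b = (\<exists>i\<in>I. \<exists>u\<in>V i. \<exists>v\<in>V i. E i u v \<and>
      a = amal_proj VJ \<iota> i u \<and> b = amal_proj VJ \<iota> i v)"

end

theory Submission
  imports Defs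
begin

lemma kwalk_parity:
  assumes "\<And>a b. E a b \<Longrightarrow> c a \<noteq> c b"
  shows "kwalk E n a b \<Longrightarrow> ((c a :: bool) = c b) = even n"
proof (induction n arbitrary: a)
  case 0 then show ?case by simp
next
  case (Suc n)
  then obtain w where "E a w" "kwalk E n w b" by auto
  with Suc.IH[of w] assms[of a w] show ?case by auto
qed

lemma kwalk_lift:
  assumes "\<And>u v. E u v \<Longrightarrow> F (f u) (f v)"
  shows "kwalk E n u v \<Longrightarrow> kwalk F n (f u) (f v)"
proof (induction n arbitrary: u)
  case 0 then show ?case by simp
next
  case (Suc n)
  then obtain w where "E u w" "kwalk E n w v" by auto
  with Suc.IH[of w] assms[of u w] show ?case by auto
qed

lemma gdist_fin:
  assumes "kwalk E n u v"
  shows "\<exists>m. gdist E u v = enat m \<and> kwalk E m u v"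
  using assms unfolding gdist_def by (auto intro: LeastI)

lemma gdist_walk_eq:
  assumes "gdist E u v = enat m" shows "kwalk E m u v"
  using assms unfolding gdist_def
  by (auto split: if_splits intro: LeastI)

theorem corollary1:
  fixes I :: "'i set"
    and V :: "'i \<Rightarrow> 'v set" and E :: "'i \<Rightarrow> 'v \<Rightarrow> 'v \<Rightarrow> bool"
    and VJ :: "'j set" and EJ :: "'j \<Rightarrow> 'j \<Rightarrow> bool"
    and \<iota> :: "'i \<Rightarrow> 'j \<Rightarrow> 'v"
  assumes fin: "finite I"
    and graphs: "\<forall>i\<in>I. graph (V i) (E i)"
    and J_graph: "graph VJ EJ"
    and J_nonempty: "VJ \<noteq> {}"
    and emb_inj: "\<forall>i\<in>I. inj_on (\<iota> i) VJ"
    and emb_sub: "\<forall>i\<in>I. \<iota> i ` VJ \<subseteq> V i"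
    and emb_induced: "\<forall>i\<in>I. \<forall>x\<in>VJ. \<forall>y\<in>VJ. E i (\<iota> i x) (\<iota> i y) \<longleftrightarrow> EJ x y"
    and isometric: "\<forall>i\<in>I. \<forall>j\<in>I. \<forall>a\<in>VJ. \<forall>b\<in>VJ.
                      gdist (E i) (\<iota> i a) (\<iota> i b) = gdist (E j) (\<iota> j a) (\<iota> j b)"
    and conn: "\<forall>i\<in>I. connected_graph (V i) (E i)"
    and bip: "\<forall>i\<in>I. bipartite (V i) (E i)"
    and nontrivial: "\<exists>i\<in>I. \<exists>u v. E i u v"
  shows "edge_metric_dim (amal_V I V VJ \<iota>) (amal_E I V E VJ \<iota>) = 1"
proof -
  define H where "H = amal_E I V E VJ \<iota>"
  define HV where "HV = amal_V I V VJ \<iota>"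
  obtain x0 where x0: "x0 \<in> VJ" using J_nonempty by auto
  obtain i0 where i0: "i0 \<in> I" using nontrivial by auto
  define col where "col i v = even (the_enat (gdist (E i) (\<iota> i x0) v))" for i v
  have edgeV: "u \<in> V i \<and> v \<in> V i" if "i \<in> I" "E i u v" for i u v
    using graphs that unfolding graph_def by blast
  have walk0: "\<exists>n. kwalk (E i) n (\<iota> i x0) u" if "i \<in> I" "u \<in> V i" for i u
    using conn that emb_sub x0 unfolding connected_graph_def by blast
  have colwalk: "kwalk (E i) (the_enat (gdist (E i) (\<iota> i x0) u)) (\<iota> i x0) u
        \<and> col i u = even (the_enat (gdist (E i) (\<iota> i x0) u))"
    if iu: "i \<in> I" "u \<in> V i" for i u
  proof -
    obtain n where "kwalk (E i) n (\<iota> i x0) u" using walk0 iu by blast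
    from gdist_fin[OF this] obtain m where "gdist (E i) (\<iota> i x0) u = enat m"
      "kwalk (E i) m (\<iota> i x0) u" by blast
    then show ?thesis unfolding col_def by simp
  qed
  have col_edge: "col i u \<noteq> col i v" if ie: "i \<in> I" "E i u v" for i u v
  proof -
    obtain A where A: "\<forall>u v. E i u v \<longrightarrow> (u \<in> A \<longleftrightarrow> v \<notin> A)"
    proof -
      have "bipartite (V i) (E i)" using bip ie(1) by blast
      then show ?thesis using that unfolding bipartite_def by blast
    qed
    have AA: "\<And>a b. E i a b \<Longrightarrow> (a \<in> A) \<noteq> (b \<in> A)" using A by simp
    have uv: "u \<in> V i" "v \<in> V i" using edgeV ie by auto
    note cu = colwalk[OF ie(1) uv(1)] and cv = colwalk[OF ie(1) uv(2)]
    have "((\<iota> i x0 \<in> A) = (u \<in> A)) = col i u"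
      using kwalk_parity[of "E i" "\<lambda>a. a \<in> A", OF AA conjunct1[OF cu]] conjunct2[OF cu] by simp
    moreover have "((\<iota> i x0 \<in> A) = (v \<in> A)) = col i v"
      using kwalk_parity[of "E i" "\<lambda>a. a \<in> A", OF AA conjunct1[OF cv]] conjunct2[OF cv] by simp
    moreover have "(u \<in> A) \<noteq> (v \<in> A)" using AA ie(2) by simp
    ultimately show ?thesis by (metis (full_types))
  qed
  define c where "c a = (case a of Inl x \<Rightarrow> col i0 (\<iota> i0 x) | Inr p \<Rightarrow> col (fst p) (snd p))" for a
  have c_proj: "c (amal_proj VJ \<iota> i u) = col i u" if "i \<in> I" "u \<in> V i" for i u
  proof (cases "u \<in> \<iota> i ` VJ")
    case True
    then obtain x where x: "x \<in> VJ" "u = \<iota> i x" by auto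
    have "the_inv_into VJ (\<iota> i) u = x"
      using x emb_inj that(1) by (simp add: the_inv_into_f_f)
    then have "c (amal_proj VJ \<iota> i u) = col i0 (\<iota> i0 x)"
      unfolding amal_proj_def c_def using True by simp
    also have "\<dots> = col i u"
    proof -
      have "gdist (E i0) (\<iota> i0 x0) (\<iota> i0 x) = gdist (E i) (\<iota> i x0) (\<iota> i x)"
        using isometric i0 that(1) x0 x(1) by blast
      then show ?thesis unfolding col_def x(2) by simp
    qed
    finally show ?thesis .
  next
    case False then show ?thesis unfolding amal_proj_def c_def by simp
  qed
  have c_edge: "c a \<noteq> c b" if hab: "H a b" for a b
  proof -
    obtain i u v where iuv: "i \<in> I" "u \<in> V i" "v \<in> V i" "E i u v"
      "a = amal_proj VJ \<iota> i u" "b = amal_proj VJ \<iota> i v"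
      using hab unfolding H_def amal_E_def by blast
    then show ?thesis using c_proj[of i u] c_proj[of i v] col_edge[of i u v] by simp
  qed
  have lift: "H (amal_proj VJ \<iota> i u) (amal_proj VJ \<iota> i v)" if "i \<in> I" "E i u v" for i u v
    unfolding H_def amal_E_def using that edgeV by blast
  define w where "w = amal_proj VJ \<iota> i0 (\<iota> i0 x0)"
  have wV: "w \<in> HV" 
  proof -
    have "\<iota> i0 x0 \<in> V i0" using i0 x0 emb_sub by blast
    then have "w \<in> amal_proj VJ \<iota> i0 ` V i0" unfolding w_def by (rule imageI)
    then show ?thesis unfolding HV_def amal_V_def using i0 by blast
  qed
  have reach: "\<exists>n. kwalk H n w a" if hab: "H a b" for a b
  proof -
    obtain i u v where iuv: "i \<in> I" "u \<in> V i" "E i u v" "a = amal_proj VJ \<iota> i u"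
      using hab unfolding H_def amal_E_def by blast
    obtain n where n: "kwalk (E i) n (\<iota> i x0) u" using walk0 iuv by blast
    have "kwalk H n (amal_proj VJ \<iota> i (\<iota> i x0)) a"
      using kwalk_lift[of "E i" H "amal_proj VJ \<iota> i", OF lift[OF iuv(1)] n] iuv(4) by simp
    moreover have "amal_proj VJ \<iota> i (\<iota> i x0) = w"
    proof -
      have "the_inv_into VJ (\<iota> i) (\<iota> i x0) = x0"
        using x0 emb_inj iuv(1) by (simp add: the_inv_into_f_f)
      moreover have "the_inv_into VJ (\<iota> i0) (\<iota> i0 x0) = x0"
        using x0 emb_inj i0 by (simp add: the_inv_into_f_f)
      ultimately show ?thesis unfolding w_def amal_proj_def using x0 by simp
    qed
    ultimately show ?thesis by blast
  qed
  have resolving: "edge_resolving HV H {w}"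
    unfolding edge_resolving_def
  proof (intro conjI allI impI)
    show "{w} \<subseteq> HV" using wV by simp
    fix a b assume ab: "H a b"
    obtain n where "kwalk H n w a" using reach ab by blast
    from gdist_fin[OF this] obtain m where m: "gdist H w a = enat m" "kwalk H m w a" by blast
    show "\<exists>w'\<in>{w}. gdist H w' a \<noteq> gdist H w' b"
    proof (rule ccontr)
      assume "\<not> ?thesis"
      then have "gdist H w b = enat m" using m by simp
      then have "kwalk H m w b" by (rule gdist_walk_eq)
      then have "(c w = c b) = even m" using kwalk_parity[of H c, OF c_edge] by blast
      moreover have "(c w = c a) = even m" using kwalk_parity[of H c, OF c_edge] m(2) by blast
      ultimately show False using c_edge[OF ab] by blast
    qed
  qed
  have hasedge: "\<exists>a b. H a b" using nontrivial lift by meson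
  have not0: "\<not> edge_resolving HV H {}"
    using hasedge unfolding edge_resolving_def by blast
  have "(LEAST k. \<exists>B. finite B \<and> card B = k \<and> edge_resolving HV H B) = 1"
  proof (rule Least_equality)
    show "\<exists>B. finite B \<and> card B = 1 \<and> edge_resolving HV H B" using resolving by force
  next
    fix k assume "\<exists>B. finite B \<and> card B = k \<and> edge_resolving HV H B"
    then obtain B where "finite B" "card B = k" "edge_resolving HV H B" by blast
    then show "1 \<le> k" using not0 by (cases "k = 0") auto
  qed
  then show ?thesis unfolding edge_metric_dim_def H_def HV_def .
qed

end
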